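(* Consider the resilient constrained consensus algorithm described in the context, with at most $f$ Byzantine agents. Suppose $\mathcal X=\bigcap_{i\in\mathcal H}\mathcal X_i=\{x^*\}$ is a singleton, and suppose the set of normal agents $\mathcal H$ is $k$-redundant. Suppose there is a constant $\mu>0$ such that for every $x\in\mathbb R^m$ and every $\mathcal S\subseteq\mathcal H$ with $|\mathcal S|\ge n-k$, $$\max_{i\in\mathcal S}\mathrm{dist}(x,\mathcal X_i)\ \ge\ \mu\,\mathrm{dist}\Big(x,\bigcap_{i\in\mathcal S}\mathcal X_i\Big).$$ If $k>\frac{4f}{\mu^2}+2f-1$ and $0<\alpha<\frac{\mu^2k-2f\mu^2-4f+\mu^2}{4|\mathcal H|^3}$, then there is a constant $\rho\in(0,1)$ such that for all $t\ge 0$ $$\sum_{i\in\mathcal H}\|x_i(t)-x^*\|^2\le\rho^t\sum_{i\in\mathcal H}\|x_i(0)-x^*\|^2.$$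
   Context: Setting: There are $n$ agents $\mathcal N=\{1,\dots,n\}$, and every agent can communicate with every other agent (complete graph). An integer $f\ge 0$ is known to all agents. The agents are partitioned into normal agents $\mathcal H$ and Byzantine agents $\mathcal F$ with $|\mathcal F|\le f$, so $|\mathcal H|\ge n-f$. Each normal agent $i\in\mathcal H$ has a nonempty closed convex set $\mathcal X_i\subseteq\mathbb R^m$. Each normal agent's state is constrained to lie in $\mathcal X_i$; in particular $x_i(0)\in\mathcal X_i$. Algorithm (discrete time $t=0,1,2,\dots$): each normal agent $i$ has a state $x_i(t)\in\mathbb R^m$. At time $t$, agent $i$ receives a vector $x_{ji}(t)$ from each $j\in\mathcal N\setminus\{i\}$. If $j\in\mathcal H$, then $x_{ji}(t)=x_j(t)$. If $j\in\mathcal F$, then $x_{ji}(t)$ is arbitrary and may differ for different recipients. Agent $i$ discards the $f$ received vectors with the largest distance $\|x_i(t)-x_{ji}(t)\|$, with ties broken arbitrarily. Let $\mathcal M_i(t)\subseteq\mathcal N\setminus\{i\}$ be the set of the remaining $n-f-1$ senders. The update is $$x_i(t+1)=\mathrm P_{\mathcal X_i}\Big[x_i(t)+\alpha\sum_{j\in\mathcal M_i(t)}(x_{ji}(t)-x_i(t))\Big],$$ with $\alpha>0$ and $\mathrm P_{\mathcal C}$ the Euclidean projection onto $\mathcal C$. Definitions: $\mathrm{dist}(x,\mathcal C)=\|x-\mathrm P_{\mathcal C}[x]\|$. $\mathcal H$ is $k$-redundant if for every $\mathcal S\subseteq\mathcal H$ with $|\mathcal S|\ge n-k$ we have $\bigcap_{i\in\mathcal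 S}\mathcal X_i=\bigcap_{i\in\mathcal H}\mathcal X_i$. *)

theory Defs
  imports "HOL-Analysis.Analysis"
begin

definition proj :: "'a::euclidean_space set \<Rightarrow> 'a \<Rightarrow> 'a" where
  "proj C x = closest_point C x"

definition dist_set :: "'a::euclidean_space \<Rightarrow> 'a set \<Rightarrow> real" where
  "dist_set x C = norm (x - proj C x)"

definition k_redundant :: "nat \<Rightarrow> nat \<Rightarrow> nat set \<Rightarrow> (nat \<Rightarrow> 'a set) \<Rightarrow> bool" where
  "k_redundant n k H X \<longleftrightarrow>
     (\<forall>S. S \<subseteq> H \<and> int (card S) \<ge> int n - int k \<longrightarrow> (\<Inter>i\<in>S. X i) = (\<Inter>i\<in>H. X i))"

text \<open>The trimming rule: agent i keeps the set M of senders after discarding the f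
received vectors farthest from its own state (ties broken arbitrarily).\<close>
definition valid_trim ::
  "nat \<Rightarrow> nat \<Rightarrow> nat \<Rightarrow> 'a::euclidean_space \<Rightarrow> (nat \<Rightarrow> 'a) \<Rightarrow> nat set \<Rightarrow> bool" where
  "valid_trim n f i xi recv M \<longleftrightarrow>
     M \<subseteq> {1..n} - {i} \<and> card ({1..n} - {i} - M) = f \<and>
     (\<forall>j\<in>M. \<forall>j'\<in>{1..n} - {i} - M. norm (xi - recv j) \<le> norm (xi - recv j'))"

end

theory Submission
  imports Defs
begin


lemma sum_le_card_bound:
  fixes g h :: "'b \<Rightarrow> real"
  assumes "finite A" "finite B" "card A \<le> card B"
    and "\<And>a b. a \<in> A \<Longrightarrow> b \<in> B \<Longrightarrow> g a \<le> h b"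
    and "\<And>b. b \<in> B \<Longrightarrow> 0 \<le> h b"
  shows "sum g A \<le> sum h B"
proof (cases "A = {}")
  case True
  then show ?thesis using assms(5) by (simp add: sum_nonneg)
next
  case False
  then have Bne: "B \<noteq> {}" using assms(1,3) card_gt_0_iff by fastforce
  define m where "m = Min (h ` B)"
  have mB: "\<And>b. b \<in> B \<Longrightarrow> m \<le> h b" using assms(2) m_def by simp
  have m0: "0 \<le> m" using Bne assms(2,5) m_def by simp
  have "sum g A \<le> sum (\<lambda>_. m) A"
  proof (rule sum_mono)
    fix a assume "a \<in> A"
    have "m \<in> h ` B" using Bne assms(2) m_def by simp
    then obtain b where "b \<in> B" "m = h b" by auto
    then show "g a \<le> m" using assms(4) \<open>a \<in> A\<close> by simp
  qed
  also have "\<dots> = real (card A) * m" by simp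
  also have "\<dots> \<le> real (card B) * m" using assms(3) m0 by (simp add: mult_right_mono)
  also have "\<dots> = sum (\<lambda>_. m) B" by simp
  also have "\<dots> \<le> sum h B" using mB by (rule sum_mono)
  finally show ?thesis .
qed

lemma trim_facts:
  assumes H: "H \<subseteq> {1..n}" and byz: "card ({1..n} - H) \<le> f" and i: "i \<in> H"
    and vt: "valid_trim n f i xi recv M"
  shows "card (M - H) \<le> card ((H - {i}) - M)" "card ((H - {i}) - M) \<le> f"
    "card M + f + 1 = n" "card M \<le> card H" "card (M - H) \<le> f" "finite M"
    "M \<subseteq> {1..n} - {i}" "i \<notin> M"
    "\<And>j j'. j \<in> M \<Longrightarrow> j' \<in> {1..n} - {i} - M \<Longrightarrow> norm (xi - recv j) \<le> norm (xi - recv j')"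
proof -
  have Msub: "M \<subseteq> {1..n} - {i}" and cD: "card ({1..n} - {i} - M) = f"
    and ord: "\<forall>j\<in>M. \<forall>j'\<in>{1..n} - {i} - M. norm (xi - recv j) \<le> norm (xi - recv j')"
    using vt unfolding valid_trim_def by auto
  show "M \<subseteq> {1..n} - {i}" by fact
  show "i \<notin> M" using Msub by auto
  show "finite M" using Msub finite_subset by blast
  show "\<And>j j'. j \<in> M \<Longrightarrow> j' \<in> {1..n} - {i} - M \<Longrightarrow> norm (xi - recv j) \<le> norm (xi - recv j')"
    using ord by blast
  have in1: "i \<in> {1..n}" using H i by auto
  have c1: "card ({1..n} - {i}) = n - 1" using in1 by simp
  have "card ({1..n} - {i} - M) = card ({1..n} - {i}) - card M"
    using Msub by (simp add: card_Diff_subset finite_subset)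
  moreover have "card M \<le> card ({1..n} - {i})" using Msub by (simp add: card_mono)
  moreover have "n \<ge> 1" using in1 by simp
  ultimately show cM: "card M + f + 1 = n" using cD c1 by linarith
  have "card H + card ({1..n} - H) = n"
    using H by (metis card_Diff_subset card_atLeastAtMost diff_Suc_1 finite_atLeastAtMost finite_subset card_mono le_add_diff_inverse)
  then show "card M \<le> card H" using cM byz by linarith
  have split: "{1..n} - {i} - M = ((H - {i}) - M) \<union> (({1..n} - H) - M)" using H i by auto
  have disj: "((H - {i}) - M) \<inter> (({1..n} - H) - M) = {}" by auto
  have "f = card ((H - {i}) - M) + card (({1..n} - H) - M)"
    using cD split disj by (metis card_Un_disjoint finite_Diff finite_atLeastAtMost finite_subset H)
  moreover have "card ({1..n} - H) = card (M - H) + card (({1..n} - H) - M)"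
  proof -
    have "{1..n} - H = (M - H) \<union> (({1..n} - H) - M)" using Msub by auto
    moreover have "(M - H) \<inter> (({1..n} - H) - M) = {}" by auto
    ultimately show ?thesis by (metis card_Un_disjoint finite_Diff finite_atLeastAtMost finite_subset Msub finite_Diff2)
  qed
  ultimately show "card (M - H) \<le> card ((H - {i}) - M)" "card ((H - {i}) - M) \<le> f" "card (M - H) \<le> f"
    using byz by linarith+
qed



lemma ident2:
  fixes yi yj xs :: "'a::euclidean_space"
  shows "2 * inner (yi - xs) (yj - yi) = (norm (yj - xs))\<^sup>2 - (norm (yi - xs))\<^sup>2 - (norm (yj - yi))\<^sup>2"
  by (simp add: power2_norm_eq_inner inner_diff_left inner_diff_right inner_commute algebra_simps)

lemma normsq_expand:
  fixes e u :: "'a::euclidean_space"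
  shows "(norm (e + a *\<^sub>R u))\<^sup>2 = (norm e)\<^sup>2 + 2 * a * inner e u + a\<^sup>2 * (norm u)\<^sup>2"
proof -
  have "(norm (e + a *\<^sub>R u))\<^sup>2 = inner (e + a *\<^sub>R u) (e + a *\<^sub>R u)" by (simp add: power2_norm_eq_inner)
  also have "\<dots> = inner e e + 2 * a * inner e u + a\<^sup>2 * inner u u"
    by (simp add: inner_add_left inner_add_right inner_commute algebra_simps power2_eq_square)
  finally show ?thesis by (simp add: power2_norm_eq_inner)
qed

lemma dist_set_singleton: "dist_set y {z} = norm (y - z)"
  unfolding dist_set_def proj_def
  using closest_point_in_set[of "{z}" y] by auto

lemma dist_set_le: "closed C \<Longrightarrow> z \<in> C \<Longrightarrow> dist_set y C \<le> norm (y - z)"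
  unfolding dist_set_def proj_def using closest_point_le[of C z y] by (simp add: dist_norm)

lemma dist_set_self: "z \<in> C \<Longrightarrow> dist_set z C = 0"
  unfolding dist_set_def proj_def by (simp add: closest_point_self)

lemma proj_nonexp:
  assumes "convex C" "closed C" "C \<noteq> {}" "z \<in> C"
  shows "norm (proj C v - z) \<le> norm (v - z)"
  using closest_point_lipschitz[OF assms(1-3), of v z] closest_point_self[OF assms(4)]
  unfolding proj_def by (simp add: dist_norm)



theorem theorem2:
  fixes n f k :: nat
    and H :: "nat set"
    and X :: "nat \<Rightarrow> 'a::euclidean_space set"
    and x :: "nat \<Rightarrow> nat \<Rightarrow> 'a"
    and msg :: "nat \<Rightarrow> nat \<Rightarrow> nat \<Rightarrow> 'a"
    and M :: "nat \<Rightarrow> nat \<Rightarrow> nat set"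
    and \<alpha> \<mu> :: real
    and xstar :: 'a
  assumes H_sub: "H \<subseteq> {1..n}"
    and byz: "card ({1..n} - H) \<le> f"
    and X_ne: "\<And>i. i \<in> H \<Longrightarrow> X i \<noteq> {}"
    and X_closed: "\<And>i. i \<in> H \<Longrightarrow> closed (X i)"
    and X_convex: "\<And>i. i \<in> H \<Longrightarrow> convex (X i)"
    and init: "\<And>i. i \<in> H \<Longrightarrow> x 0 i \<in> X i"
    and msg_normal: "\<And>t i j. i \<in> H \<Longrightarrow> j \<in> H \<Longrightarrow> j \<noteq> i \<Longrightarrow> msg t j i = x t j"
    and trim: "\<And>t i. i \<in> H \<Longrightarrow> valid_trim n f i (x t i) (\<lambda>j. msg t j i) (M t i)"
    and update: "\<And>t i. i \<in> H \<Longrightarrow>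
        x (Suc t) i = proj (X i) (x t i + \<alpha> *\<^sub>R (\<Sum>j\<in>M t i. msg t j i - x t i))"
    and alpha_pos: "\<alpha> > 0"
    and singleton: "(\<Inter>i\<in>H. X i) = {xstar}"
    and redundant: "k_redundant n k H X"
    and mu_pos: "\<mu> > 0"
    and mu_bound: "\<And>y S. S \<subseteq> H \<Longrightarrow> S \<noteq> {} \<Longrightarrow> int (card S) \<ge> int n - int k \<Longrightarrow>
        Max ((\<lambda>i. dist_set y (X i)) ` S) \<ge> \<mu> * dist_set y (\<Inter>i\<in>S. X i)"
    and k_bound: "real k > 4 * real f / \<mu>\<^sup>2 + 2 * real f - 1"
    and alpha_bound: "\<alpha> < (\<mu>\<^sup>2 * real k - 2 * real f * \<mu>\<^sup>2 - 4 * real f + \<mu>\<^sup>2) / (4 * real (card H) ^ 3)"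
  shows "\<exists>\<rho>::real. 0 < \<rho> \<and> \<rho> < 1 \<and>
    (\<forall>t. (\<Sum>i\<in>H. (norm (x t i - xstar))\<^sup>2) \<le> \<rho> ^ t * (\<Sum>i\<in>H. (norm (x 0 i - xstar))\<^sup>2))"
  proof -
  define V where "V t = (\<Sum>i\<in>H. (norm (x t i - xstar))\<^sup>2)" for t
  define h where "h = real (card H)"
  define c where "c = \<mu>\<^sup>2 * real k - 2 * real f * \<mu>\<^sup>2 - 4 * real f + \<mu>\<^sup>2"
  have finH: "finite H" using H_sub finite_subset by blast
  have xs_in: "\<And>i. i \<in> H \<Longrightarrow> xstar \<in> X i" using singleton by blast
  have Hne: "H \<noteq> {}"
  proof
    assume "H = {}"
    then have U: "(UNIV :: 'a set) = {xstar}" using singleton by simp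
    obtain b :: 'a where "b \<in> Basis" using nonempty_Basis by blast
    then have "xstar + b \<noteq> xstar" by auto
    then show False using U by (metis UNIV_I singletonD)
  qed
  have hpos: "h > 0" unfolding h_def using finH Hne by (simp add: card_gt_0_iff)
  have c_pos: "c > 0"
  proof -
    have m2: "\<mu>\<^sup>2 > 0" using mu_pos by simp
    have "\<mu>\<^sup>2 * real k > \<mu>\<^sup>2 * (4 * real f / \<mu>\<^sup>2 + 2 * real f - 1)"
      using k_bound m2 by (simp add: mult_strict_left_mono)
    also have "\<mu>\<^sup>2 * (4 * real f / \<mu>\<^sup>2 + 2 * real f - 1) = 4 * real f + 2 * real f * \<mu>\<^sup>2 - \<mu>\<^sup>2"
      using m2 by (simp add: field_simps)
    finally show ?thesis unfolding c_def by simp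
  qed
  have inX: "\<And>t i. i \<in> H \<Longrightarrow> x t i \<in> X i"
  proof -
    fix t i assume iH: "i \<in> H"
    show "x t i \<in> X i"
    proof (cases t)
      case 0 then show ?thesis using init iH by simp
    next
      case (Suc s) then show ?thesis using update[OF iH, of s] closest_point_in_set[OF X_closed[OF iH] X_ne[OF iH]]
        unfolding proj_def by simp
    qed
  qed
  have Vnn: "\<And>t. V t \<ge> 0" unfolding V_def by (simp add: sum_nonneg)
  have key: "V (Suc t) \<le> (1 - \<alpha> * (c - 4 * \<alpha> * h ^ 3)) * V t" for t
  proof -
    define a where "a j = norm (x t j - xstar)" for j
    define s where "s = sqrt (V t)"
    have s_sq: "s\<^sup>2 = V t" unfolding s_def using Vnn by simp
    have a_le: "a j \<le> s" if "j \<in> H" for j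
    proof -
      have "(a j)\<^sup>2 \<le> V t" unfolding V_def a_def
        using member_le_sum[of j H "\<lambda>i. (norm (x t i - xstar))\<^sup>2"] that finH by simp
      then have "sqrt ((a j)\<^sup>2) \<le> s" unfolding s_def using real_sqrt_le_mono by blast
      then show ?thesis unfolding a_def by simp
    qed
    have d_le: "norm (x t j - x t i) \<le> a j + a i" for i j
    proof -
      have "x t j - x t i = (x t j - xstar) - (x t i - xstar)" by simp
      then show ?thesis unfolding a_def by (metis norm_triangle_ineq4)
    qed
    have per: "(norm (x (Suc t) i - xstar))\<^sup>2 \<le> (a i)\<^sup>2 + \<alpha> * ((\<Sum>j\<in>H - {i}. (a j)\<^sup>2 - (a i)\<^sup>2) - c * (a i)\<^sup>2)
        + \<alpha>\<^sup>2 * (4 * h\<^sup>2 * V t)" if iH: "i \<in> H" for i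
    proof -
      let ?M = "M t i"
      define K where "K = ?M \<inter> H"
      define B where "B = ?M - H"
      define D where "D = (H - {i}) - ?M"
      define u where "u = (\<Sum>j\<in>?M. msg t j i - x t i)"
      define e where "e = x t i - xstar"
      note TF = trim_facts[OF H_sub byz iH trim[OF iH, of t]]
      have finM: "finite ?M" by (rule TF(6))
      have iM: "i \<notin> ?M" by (rule TF(8))
      have finD: "finite D" unfolding D_def using finH by simp
      have finK: "finite K" unfolding K_def using finM by simp
      have finB: "finite B" unfolding B_def using finM by simp
      have cBD: "card B \<le> card D" unfolding B_def D_def by (rule TF(1))
      have cD: "card D \<le> f" unfolding D_def by (rule TF(2))
      have msgK: "msg t j i = x t j" if "j \<in> K" for j
        using msg_normal[OF iH, of j t] that iM unfolding K_def by auto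
      have msgD: "msg t j i = x t j" if "j \<in> D" for j
        using msg_normal[OF iH, of j t] that unfolding D_def by auto
      have ordBD: "norm (msg t j i - x t i) \<le> norm (x t j' - x t i)" if "j \<in> B" "j' \<in> D" for j j'
      proof -
        have "j' \<in> {1..n} - {i} - ?M" using that(2) H_sub unfolding D_def by auto
        then have "norm (x t i - msg t j i) \<le> norm (x t i - msg t j' i)"
          using TF(9)[of j j'] that(1) unfolding B_def by auto
        then show ?thesis using msgD[OF that(2)] by (simp add: norm_minus_commute)
      qed
      have step1: "norm (x (Suc t) i - xstar) \<le> norm (e + \<alpha> *\<^sub>R u)"
      proof -
        have "norm (x (Suc t) i - xstar) \<le> norm ((x t i + \<alpha> *\<^sub>R u) - xstar)"
          using update[OF iH, of t] proj_nonexp[OF X_convex[OF iH] X_closed[OF iH] X_ne[OF iH] xs_in[OF iH]]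
          unfolding u_def by simp
        also have "(x t i + \<alpha> *\<^sub>R u) - xstar = e + \<alpha> *\<^sub>R u" unfolding e_def by simp
        finally show ?thesis .
      qed
      have sq1: "(norm (x (Suc t) i - xstar))\<^sup>2 \<le> (a i)\<^sup>2 + 2 * \<alpha> * inner e u + \<alpha>\<^sup>2 * (norm u)\<^sup>2"
      proof -
        have "(norm (x (Suc t) i - xstar))\<^sup>2 \<le> (norm (e + \<alpha> *\<^sub>R u))\<^sup>2"
          using step1 by (simp add: power_mono)
        then show ?thesis using normsq_expand[of e \<alpha> u] unfolding e_def a_def by simp
      qed
      have inner_split: "2 * inner e u = (\<Sum>j\<in>K. 2 * inner e (x t j - x t i)) + (\<Sum>j\<in>B. 2 * inner e (msg t j i - x t i))"
      proof -
        have "2 * inner e u = (\<Sum>j\<in>?M. 2 * inner e (msg t j i - x t i))"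
          unfolding u_def by (simp add: inner_sum_right sum_distrib_left)
        also have "\<dots> = (\<Sum>j\<in>K. 2 * inner e (msg t j i - x t i)) + (\<Sum>j\<in>B. 2 * inner e (msg t j i - x t i))"
          unfolding K_def B_def by (rule sum.Int_Diff[OF finM])
        also have "(\<Sum>j\<in>K. 2 * inner e (msg t j i - x t i)) = (\<Sum>j\<in>K. 2 * inner e (x t j - x t i))"
          using msgK by (intro sum.cong) auto
        finally show ?thesis .
      qed
      have Kid: "(\<Sum>j\<in>K. 2 * inner e (x t j - x t i)) = (\<Sum>j\<in>K. (a j)\<^sup>2 - (a i)\<^sup>2) - (\<Sum>j\<in>K. (norm (x t j - x t i))\<^sup>2)"
      proof -
        have "(\<Sum>j\<in>K. 2 * inner e (x t j - x t i)) = (\<Sum>j\<in>K. ((a j)\<^sup>2 - (a i)\<^sup>2) - (norm (x t j - x t i))\<^sup>2)"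
          unfolding e_def a_def using ident2 by (intro sum.cong) auto
        then show ?thesis by (simp add: sum_subtractf)
      qed
      have KD: "(\<Sum>j\<in>K. (a j)\<^sup>2 - (a i)\<^sup>2) = (\<Sum>j\<in>H - {i}. (a j)\<^sup>2 - (a i)\<^sup>2) + (\<Sum>j\<in>D. (a i)\<^sup>2 - (a j)\<^sup>2)"
      proof -
        have "(\<Sum>j\<in>H - {i}. (a j)\<^sup>2 - (a i)\<^sup>2) = (\<Sum>j\<in>(H - {i}) \<inter> ?M. (a j)\<^sup>2 - (a i)\<^sup>2) + (\<Sum>j\<in>D. (a j)\<^sup>2 - (a i)\<^sup>2)"
          unfolding D_def using finH by (intro sum.Int_Diff) simp
        moreover have "(H - {i}) \<inter> ?M = K" unfolding K_def using iM by auto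
        moreover have "(\<Sum>j\<in>D. (a i)\<^sup>2 - (a j)\<^sup>2) = - (\<Sum>j\<in>D. (a j)\<^sup>2 - (a i)\<^sup>2)"
          by (simp add: sum_negf[symmetric])
        ultimately show ?thesis by simp
      qed
      have Bbound: "(\<Sum>j\<in>B. 2 * inner e (msg t j i - x t i)) \<le> (\<Sum>j\<in>D. 2 * a i * norm (x t j - x t i))"
      proof -
        have "(\<Sum>j\<in>B. 2 * inner e (msg t j i - x t i)) \<le> (\<Sum>j\<in>B. 2 * a i * norm (msg t j i - x t i))"
        proof (rule sum_mono)
          fix j assume "j \<in> B"
          have "inner e (msg t j i - x t i) \<le> norm e * norm (msg t j i - x t i)" by (rule norm_cauchy_schwarz)
          then show "2 * inner e (msg t j i - x t i) \<le> 2 * a i * norm (msg t j i - x t i)"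
            unfolding e_def a_def by simp
        qed
        also have "\<dots> \<le> (\<Sum>j\<in>D. 2 * a i * norm (x t j - x t i))"
        proof (rule sum_le_card_bound[OF finB finD cBD])
          fix j j' assume "j \<in> B" "j' \<in> D"
          have "a i \<ge> 0" unfolding a_def by simp
          then show "2 * a i * norm (msg t j i - x t i) \<le> 2 * a i * norm (x t j' - x t i)"
            using ordBD[OF \<open>j \<in> B\<close> \<open>j' \<in> D\<close>] by (simp add: mult_left_mono)
        next
          fix j' show "0 \<le> 2 * a i * norm (x t j' - x t i)" unfolding a_def by simp
        qed
        finally show ?thesis .
      qed
      have Dbound: "(\<Sum>j\<in>D. (a i)\<^sup>2 - (a j)\<^sup>2) + (\<Sum>j\<in>D. 2 * a i * norm (x t j - x t i)) \<le> 4 * real f * (a i)\<^sup>2"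
      proof -
        have "(\<Sum>j\<in>D. (a i)\<^sup>2 - (a j)\<^sup>2) + (\<Sum>j\<in>D. 2 * a i * norm (x t j - x t i))
            = (\<Sum>j\<in>D. (a i)\<^sup>2 - (a j)\<^sup>2 + 2 * a i * norm (x t j - x t i))" by (simp add: sum.distrib)
        also have "\<dots> \<le> (\<Sum>j\<in>D. 4 * (a i)\<^sup>2)"
        proof (rule sum_mono)
          fix j assume "j \<in> D"
          have ai: "a i \<ge> 0" "a j \<ge> 0" unfolding a_def by simp_all
          have "2 * a i * norm (x t j - x t i) \<le> 2 * a i * (a j + a i)"
            using d_le[of j i] ai by (simp add: mult_left_mono)
          moreover have "0 \<le> (a i - a j)\<^sup>2" by simp
          ultimately show "(a i)\<^sup>2 - (a j)\<^sup>2 + 2 * a i * norm (x t j - x t i) \<le> 4 * (a i)\<^sup>2"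
            by (simp add: power2_eq_square algebra_simps)
        qed
        also have "\<dots> = real (card D) * 4 * (a i)\<^sup>2" by simp
        also have "\<dots> \<le> real f * 4 * (a i)\<^sup>2" using cD by (simp add: mult_right_mono)
        finally show ?thesis by simp
      qed
      have cK: "real (card K) \<ge> real n - 1 - 2 * real f"
      proof -
        have "card ?M = card K + card B" unfolding K_def B_def using finM
          by (metis Diff_Diff_Int Int_commute card_Diff_subset_Int card_Int_Diff finite_Int)
        then show ?thesis using TF(3) TF(5) unfolding B_def by linarith
      qed
      have count: "(\<Sum>j\<in>K. (norm (x t j - x t i))\<^sup>2) \<ge> (c + 4 * real f) * (a i)\<^sup>2"
      proof (cases "a i = 0")
        case True then show ?thesis by (simp add: sum_nonneg)
      next
        case False
        then have ai: "a i > 0" unfolding a_def by simp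
        define G where "G = {j \<in> K. norm (x t j - x t i) \<ge> \<mu> * a i}"
        have finG: "finite G" unfolding G_def using finK by simp
        have GK: "G \<subseteq> K" unfolding G_def by auto
        have cG: "real (card G) \<ge> real k - 2 * real f + 1"
        proof (rule ccontr)
          assume "\<not> ?thesis"
          then have "real (card G + 2 * f) < real (k + 1)" by simp
          then have "card G + 2 * f < k + 1" by (simp only: of_nat_less_iff)
          then have "card G + 2 * f \<le> k" by simp
          then have "real (card G + 2 * f) \<le> real k" by (simp only: of_nat_le_iff)
          then have small: "real (card G) \<le> real k - 2 * real f" by simp
          define S where "S = insert i (K - G)"
          have iK: "i \<notin> K" unfolding K_def using iM by auto
          have SH: "S \<subseteq> H" unfolding S_def K_def using iH by auto
          have Sne: "S \<noteq> {}" unfolding S_def by simp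
          have finS: "finite S" unfolding S_def using finK by simp
          have "card S = card (K - G) + 1" unfolding S_def using iK finK by simp
          moreover have "card (K - G) = card K - card G" using GK finK by (simp add: card_Diff_subset finite_subset)
          moreover have "card G \<le> card K" using GK finK by (simp add: card_mono)
          ultimately have "real (card S) = real (card K) - real (card G) + 1" by simp
          then have cS: "int (card S) \<ge> int n - int k" using cK small by linarith
          have inter: "(\<Inter>j\<in>S. X j) = {xstar}"
            using redundant SH cS singleton unfolding k_redundant_def by auto
          have "Max ((\<lambda>j. dist_set (x t i) (X j)) ` S) \<ge> \<mu> * a i"
            using mu_bound[OF SH Sne cS, of "x t i"] inter dist_set_singleton[of "x t i" xstar] unfolding a_def by simp
          moreover have "Max ((\<lambda>j. dist_set (x t i) (X j)) ` S) \<in> (\<lambda>j. dist_set (x t i) (X j)) ` S"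
            using finS Sne by (intro Max_in) auto
          then obtain j where jS: "j \<in> S" and jeq: "Max ((\<lambda>j. dist_set (x t i) (X j)) ` S) = dist_set (x t i) (X j)"
            by auto
          ultimately have ge: "dist_set (x t i) (X j) \<ge> \<mu> * a i" by simp
          have "\<mu> * a i > 0" using mu_pos ai by simp
          show False
          proof (cases "j = i")
            case True
            then show False using ge dist_set_self[OF inX[OF iH, of t]] \<open>\<mu> * a i > 0\<close> by simp
          next
            case False
            then have jKG: "j \<in> K - G" using jS unfolding S_def by auto
            then have jH: "j \<in> H" unfolding K_def by auto
            have "dist_set (x t i) (X j) \<le> norm (x t i - x t j)"
              by (rule dist_set_le[OF X_closed[OF jH] inX[OF jH]])
            moreover have "norm (x t j - x t i) < \<mu> * a i" using jKG unfolding G_def by auto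
            ultimately show False using ge by (simp add: norm_minus_commute)
          qed
        qed
        have "(\<Sum>j\<in>K. (norm (x t j - x t i))\<^sup>2) \<ge> (\<Sum>j\<in>G. (norm (x t j - x t i))\<^sup>2)"
          using GK finK by (intro sum_mono2) auto
        moreover have "(\<Sum>j\<in>G. (norm (x t j - x t i))\<^sup>2) \<ge> (\<Sum>j\<in>G. (\<mu> * a i)\<^sup>2)"
        proof (rule sum_mono)
          fix j assume "j \<in> G"
          then have "\<mu> * a i \<le> norm (x t j - x t i)" unfolding G_def by auto
          moreover have "0 \<le> \<mu> * a i" using mu_pos ai by simp
          ultimately show "(\<mu> * a i)\<^sup>2 \<le> (norm (x t j - x t i))\<^sup>2" by (simp add: power_mono)
        qed
        moreover have "(\<Sum>j\<in>G. (\<mu> * a i)\<^sup>2) = real (card G) * \<mu>\<^sup>2 * (a i)\<^sup>2" by (simp add: power_mult_distrib mult.assoc)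
        moreover have "real (card G) * \<mu>\<^sup>2 * (a i)\<^sup>2 \<ge> (real k - 2 * real f + 1) * \<mu>\<^sup>2 * (a i)\<^sup>2"
          using cG by (simp add: mult_right_mono)
        moreover have "(real k - 2 * real f + 1) * \<mu>\<^sup>2 * (a i)\<^sup>2 = (c + 4 * real f) * (a i)\<^sup>2" unfolding c_def by (simp add: algebra_simps)
        ultimately show ?thesis by linarith
      qed
      have inner_bound: "2 * inner e u \<le> (\<Sum>j\<in>H - {i}. (a j)\<^sup>2 - (a i)\<^sup>2) - c * (a i)\<^sup>2"
        using inner_split Kid KD Bbound Dbound count by (simp add: algebra_simps)
      have term_le: "norm (msg t j i - x t i) \<le> 2 * s" if "j \<in> ?M" for j
      proof (cases "j \<in> H")
        case True
        then have "j \<in> K" unfolding K_def using that by simp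
        then have "norm (msg t j i - x t i) = norm (x t j - x t i)" using msgK by simp
        also have "\<dots> \<le> a j + a i" by (rule d_le)
        also have "\<dots> \<le> 2 * s" using a_le[OF True] a_le[OF iH] by simp
        finally show ?thesis .
      next
        case False
        then have jB: "j \<in> B" unfolding B_def using that by simp
        then have "card B > 0" using finB card_gt_0_iff by blast
        then have "D \<noteq> {}" using cBD by auto
        then obtain j' where j'D: "j' \<in> D" by blast
        then have j'H: "j' \<in> H" unfolding D_def by simp
        have "norm (msg t j i - x t i) \<le> norm (x t j' - x t i)" by (rule ordBD[OF jB j'D])
        also have "\<dots> \<le> a j' + a i" by (rule d_le)
        also have "\<dots> \<le> 2 * s" using a_le[OF j'H] a_le[OF iH] by simp
        finally show ?thesis .
      qed
      have s0: "s \<ge> 0" unfolding s_def using Vnn by simp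
      have "norm u \<le> (\<Sum>j\<in>?M. norm (msg t j i - x t i))" unfolding u_def by (rule norm_sum)
      also have "\<dots> \<le> (\<Sum>j\<in>?M. 2 * s)" using term_le by (rule sum_mono)
      also have "\<dots> = real (card ?M) * (2 * s)" by simp
      also have "\<dots> \<le> h * (2 * s)" unfolding h_def using TF(4) s0 by (simp add: mult_right_mono)
      finally have nu: "norm u \<le> h * (2 * s)" .
      have "(norm u)\<^sup>2 \<le> (h * (2 * s))\<^sup>2" using nu by (simp add: power_mono)
      also have "\<dots> = 4 * h\<^sup>2 * V t" using s_sq by (simp add: power_mult_distrib)
      finally have nu2: "(norm u)\<^sup>2 \<le> 4 * h\<^sup>2 * V t" .
      have "2 * \<alpha> * inner e u \<le> \<alpha> * ((\<Sum>j\<in>H - {i}. (a j)\<^sup>2 - (a i)\<^sup>2) - c * (a i)\<^sup>2)"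
      proof -
        have "\<alpha> * (2 * inner e u) \<le> \<alpha> * ((\<Sum>j\<in>H - {i}. (a j)\<^sup>2 - (a i)\<^sup>2) - c * (a i)\<^sup>2)"
          using inner_bound alpha_pos by (intro mult_left_mono) auto
        then show ?thesis by (simp add: mult.assoc mult.left_commute)
      qed
      moreover have "\<alpha>\<^sup>2 * (norm u)\<^sup>2 \<le> \<alpha>\<^sup>2 * (4 * h\<^sup>2 * V t)" using nu2 by (simp add: mult_left_mono)
      ultimately show ?thesis using sq1 by linarith
    qed
    have zero: "(\<Sum>i\<in>H. (\<Sum>j\<in>H - {i}. (a j)\<^sup>2 - (a i)\<^sup>2)) = 0"
    proof -
      have "(\<Sum>j\<in>H - {i}. (a j)\<^sup>2 - (a i)\<^sup>2) = V t - h * (a i)\<^sup>2" if "i \<in> H" for i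
      proof -
        have "(\<Sum>j\<in>H. (a j)\<^sup>2 - (a i)\<^sup>2) = (a i)\<^sup>2 - (a i)\<^sup>2 + (\<Sum>j\<in>H - {i}. (a j)\<^sup>2 - (a i)\<^sup>2)"
          using that finH by (simp add: sum.remove)
        moreover have "(\<Sum>j\<in>H. (a j)\<^sup>2 - (a i)\<^sup>2) = V t - h * (a i)\<^sup>2"
          unfolding V_def a_def h_def by (simp add: sum_subtractf)
        ultimately show ?thesis by simp
      qed
      then have "(\<Sum>i\<in>H. (\<Sum>j\<in>H - {i}. (a j)\<^sup>2 - (a i)\<^sup>2)) = (\<Sum>i\<in>H. V t - h * (a i)\<^sup>2)"
        by (intro sum.cong) auto
      also have "\<dots> = h * V t - h * V t"
        unfolding V_def a_def h_def by (simp add: sum_subtractf sum_distrib_left[symmetric])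
      finally show ?thesis by simp
    qed
    have "V (Suc t) \<le> (\<Sum>i\<in>H. (a i)\<^sup>2 + \<alpha> * ((\<Sum>j\<in>H - {i}. (a j)\<^sup>2 - (a i)\<^sup>2) - c * (a i)\<^sup>2)
        + \<alpha>\<^sup>2 * (4 * h\<^sup>2 * V t))"
      unfolding V_def using per by (intro sum_mono) (simp add: V_def)
    also have "\<dots> = V t + \<alpha> * ((\<Sum>i\<in>H. (\<Sum>j\<in>H - {i}. (a j)\<^sup>2 - (a i)\<^sup>2)) - c * V t) + h * (\<alpha>\<^sup>2 * (4 * h\<^sup>2 * V t))"
      unfolding V_def a_def h_def
      by (simp add: sum.distrib sum_subtractf sum_distrib_left[symmetric] algebra_simps)
    also have "\<dots> = (1 - \<alpha> * (c - 4 * \<alpha> * h ^ 3)) * V t"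
      using zero by (simp add: power2_eq_square power3_eq_cube algebra_simps)
    finally show ?thesis .
  qed
  define \<rho>0 where "\<rho>0 = 1 - \<alpha> * (c - 4 * \<alpha> * h ^ 3)"
  define \<rho> where "\<rho> = max (1/2) \<rho>0"
  have "4 * \<alpha> * h ^ 3 < c"
  proof -
    have "\<alpha> < c / (4 * h ^ 3)" using alpha_bound unfolding c_def h_def by simp
    then show ?thesis using hpos by (simp add: field_simps)
  qed
  then have "\<rho>0 < 1" unfolding \<rho>0_def using alpha_pos by simp
  then have r1: "\<rho> < 1" and r0: "0 < \<rho>" unfolding \<rho>_def by auto
  have stepr: "V (Suc t) \<le> \<rho> * V t" for t
    using key[of t] Vnn[of t] unfolding \<rho>0_def[symmetric] \<rho>_def
    by (meson max.cobounded2 mult_right_mono order_trans)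
  have "V t \<le> \<rho> ^ t * V 0" for t
  proof (induction t)
    case 0 then show ?case by simp
  next
    case (Suc t)
    have "V (Suc t) \<le> \<rho> * V t" by (rule stepr)
    also have "\<dots> \<le> \<rho> * (\<rho> ^ t * V 0)" using Suc r0 by (simp add: mult_left_mono)
    finally show ?case by simp
  qed
  then show ?thesis using r0 r1 unfolding V_def by blast
qed

end
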